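(* Let $N\ge1$ and for $1\le i\le N$ let $S_i:\mathcal H\to\mathcal H$ be a $\kappa_i$-strict pseudocontraction with $0\le\kappa_i<1$; set $\kappa=\max_i\kappa_i$ and assume $F=\bigcap_{i=1}^N\mathrm{Fix}(S_i)\neq\emptyset$. For each $n$ let $\lambda_{n,1},\dots,\lambda_{n,N}>0$ with $\sum_i\lambda_{n,i}=1$ and $\inf_n\lambda_{n,i}>0$ for each $i$, and set $Q_n=\sum_{i=1}^N\lambda_{n,i}S_i$. Let $\alpha_n\in(\kappa,1)$ and $T_nx=\frac{x+R_nx}{2}+\frac12\big(\frac{\kappa-\alpha_n}{1-\alpha_n}\big)(x-R_nx)$ with $R_nx=\alpha_nx+(1-\alpha_n)Q_nx$. Then $(T_n)_{n\ge0}$ is coherent: for every bounded sequence $(z_n)$ with $\sum_n\|z_{n+1}-z_n\|^2<\infty$ and $\sum_n\|z_n-T_nz_n\|^2<\infty$, every weak cluster point of $(z_n)$ lies in $\bigcap_n\mathrm{Fix}(T_n)=F$.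
   Context: A map $Q:\mathcal H\to\mathcal H$ is a $\kappa$-strict pseudocontraction ($0\le\kappa<1$) if $\|Qx-Qy\|^2\le\|x-y\|^2+\kappa\|(I-Q)x-(I-Q)y\|^2$ for all $x,y$. $\mathrm{Fix}(T)=\{x:Tx=x\}$. $\mathcal H$ is a real Hilbert space. *)

theory Defs
  imports "HOL-Analysis.Analysis"
begin

text \<open>A real Hilbert space is modelled by a type of class real_inner and complete_space.\<close>

definition strict_pseudocontraction :: "real \<Rightarrow> ('a::real_inner \<Rightarrow> 'a) \<Rightarrow> bool" where
  "strict_pseudocontraction k Q \<longleftrightarrow> 0 \<le> k \<and> k < 1 \<and>
     (\<forall>x y. (norm (Q x - Q y))\<^sup>2 \<le> (norm (x - y))\<^sup>2 + k * (norm ((x - Q x) - (y - Q y)))\<^sup>2)"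

definition Fix :: "('a \<Rightarrow> 'a) \<Rightarrow> 'a set" where
  "Fix T = {x. T x = x}"

definition weakly_converges :: "(nat \<Rightarrow> 'a::real_inner) \<Rightarrow> 'a \<Rightarrow> bool" where
  "weakly_converges x p \<longleftrightarrow> (\<forall>y. ((\<lambda>n. inner (x n) y) \<longlongrightarrow> inner p y) sequentially)"

definition weak_cluster_point :: "(nat \<Rightarrow> 'a::real_inner) \<Rightarrow> 'a \<Rightarrow> bool" where
  "weak_cluster_point x p \<longleftrightarrow> (\<exists>r. strict_mono r \<and> weakly_converges (x \<circ> r) p)"

definition coherent :: "(nat \<Rightarrow> 'a::real_inner \<Rightarrow> 'a) \<Rightarrow> bool" where
  "coherent T \<longleftrightarrow> (\<forall>z. bounded (range z)
       \<longrightarrow> summable (\<lambda>n. (norm (z (Suc n) - z n))\<^sup>2)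
       \<longrightarrow> summable (\<lambda>n. (norm (z n - T n (z n)))\<^sup>2)
       \<longrightarrow> (\<forall>p. weak_cluster_point z p \<longrightarrow> p \<in> (\<Inter>n. Fix (T n))))"

end

theory Submission
  imports Defs
begin

lemma norm_add_sq: "(norm (a + b))\<^sup>2 = (norm a)\<^sup>2 + 2 * inner a b + (norm (b::'a::real_inner))\<^sup>2"
  by (simp add: power2_norm_eq_inner inner_add_left inner_add_right inner_commute)

lemma spc_fix_ineq:
  assumes "strict_pseudocontraction k S" "S p = p"
  shows "(1 - k) * (norm (x - S x))\<^sup>2 \<le> 2 * inner (x - p) (x - S x)"
proof -
  have h: "(norm (S x - S p))\<^sup>2 \<le> (norm (x - p))\<^sup>2 + k * (norm ((x - S x) - (p - S p)))\<^sup>2"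
    using assms(1) unfolding strict_pseudocontraction_def by blast
  have e: "S x - S p = (x - p) + - (x - S x)" using assms(2) by simp
  have "(norm ((x - p) + - (x - S x)))\<^sup>2 = (norm (x-p))\<^sup>2 + 2 * inner (x-p) (- (x - S x)) + (norm (- (x - S x)))\<^sup>2"
    by (rule norm_add_sq)
  moreover have "norm (- (x - S x)) = norm (x - S x)" by (rule norm_minus_cancel)
  moreover have "p - S p = 0" using assms(2) by simp
  ultimately show ?thesis using h e by (simp add: inner_minus_right algebra_simps)
qed

lemma demiclosed:
  assumes spc: "strict_pseudocontraction k S"
    and wc: "weakly_converges x p"
    and bd: "\<And>n. norm (x n - p) \<le> B"
    and e0: "(\<lambda>n. x n - S (x n)) \<longlonglongrightarrow> 0"
  shows "S p = p"
proof -
  define d where "d = p - S p"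
  define e where "e n = x n - S (x n)" for n
  have k: "k < 1" using spc unfolding strict_pseudocontraction_def by simp
  have ineq: "(1 - k) * (norm (d - e n))\<^sup>2 + 2 * inner (x n - p) d \<le> 2 * inner (x n - p) (e n)" for n
  proof -
    have h: "(norm (S (x n) - S p))\<^sup>2 \<le> (norm (x n - p))\<^sup>2 + k * (norm ((x n - S (x n)) - (p - S p)))\<^sup>2"
      using spc unfolding strict_pseudocontraction_def by blast
    have eq: "S (x n) - S p = (x n - p) + (d - e n)" by (simp add: d_def e_def)
    have eq2: "norm ((x n - S (x n)) - (p - S p)) = norm (d - e n)"
      by (metis d_def e_def norm_minus_commute)
    have "(norm ((x n - p) + (d - e n)))\<^sup>2 = (norm (x n - p))\<^sup>2 + 2 * inner (x n - p) (d - e n) + (norm (d - e n))\<^sup>2"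
      by (rule norm_add_sq)
    then show ?thesis using h unfolding eq eq2 by (simp add: inner_diff_right algebra_simps)
  qed
  have ee: "e \<longlonglongrightarrow> 0" using e0 by (simp add: e_def[abs_def])
  have wd: "(\<lambda>n. inner (x n) d) \<longlonglongrightarrow> inner p d" using wc unfolding weakly_converges_def by blast
  have wd2: "(\<lambda>n. inner (x n - p) d) \<longlonglongrightarrow> 0"
    using tendsto_diff[OF wd tendsto_const[of "inner p d"]] by (simp add: inner_diff_left)
  have l1: "(\<lambda>n. (1 - k) * (norm (d - e n))\<^sup>2 + 2 * inner (x n - p) d) \<longlonglongrightarrow> (1-k) * (norm (d - 0))\<^sup>2 + 2 * 0"
    by (intro tendsto_intros ee wd2)
  have ne: "(\<lambda>n. norm (e n)) \<longlonglongrightarrow> 0" using ee tendsto_norm_zero by blast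
  have l2: "(\<lambda>n. 2 * inner (x n - p) (e n)) \<longlonglongrightarrow> 0"
  proof (rule Lim_null_comparison[where g="\<lambda>n. 2 * B * norm (e n)"])
    show "\<forall>\<^sub>F n in sequentially. norm (2 * inner (x n - p) (e n)) \<le> 2 * B * norm (e n)"
    proof (intro always_eventually allI)
      fix n
      have "\<bar>inner (x n - p) (e n)\<bar> \<le> norm (x n - p) * norm (e n)" by (rule Cauchy_Schwarz_ineq2)
      also have "\<dots> \<le> B * norm (e n)" using bd[of n] by (simp add: mult_right_mono)
      finally show "norm (2 * inner (x n - p) (e n)) \<le> 2 * B * norm (e n)" by simp
    qed
    show "(\<lambda>n. 2 * B * norm (e n)) \<longlonglongrightarrow> 0" using tendsto_mult_right_zero[OF ne, of "2*B"] by simp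
  qed
  have "(1-k) * (norm (d - 0))\<^sup>2 + 2 * 0 \<le> 0"
    using LIMSEQ_le[OF l1 l2] ineq by blast
  hence "(1-k) * (norm d)\<^sup>2 \<le> 0" by simp
  moreover have "(1-k) * (norm d)\<^sup>2 \<ge> 0" using k by simp
  ultimately have "(1-k) * (norm d)\<^sup>2 = 0" by linarith
  hence "d = 0" using k by simp
  thus ?thesis by (simp add: d_def)
qed

theorem mainTheorem4:
  fixes N :: nat
    and S :: "nat \<Rightarrow> 'a::{real_inner, complete_space} \<Rightarrow> 'a"
    and k :: "nat \<Rightarrow> real"
    and lam :: "nat \<Rightarrow> nat \<Rightarrow> real"
    and alpha :: "nat \<Rightarrow> real"
    and T :: "nat \<Rightarrow> 'a \<Rightarrow> 'a"
  assumes N: "N \<ge> 1"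
    and S: "\<And>i. i \<in> {1..N} \<Longrightarrow> strict_pseudocontraction (k i) (S i)"
    and F: "(\<Inter>i\<in>{1..N}. Fix (S i)) \<noteq> {}"
    and lam_pos: "\<And>n i. i \<in> {1..N} \<Longrightarrow> lam n i > 0"
    and lam_sum: "\<And>n. (\<Sum>i=1..N. lam n i) = 1"
    and lam_inf: "\<And>i. i \<in> {1..N} \<Longrightarrow> \<exists>c>0. \<forall>n. c \<le> lam n i"
    and alpha: "\<And>n. Max (k ` {1..N}) < alpha n \<and> alpha n < 1"
    and T: "\<And>n x. T n x =
       (let Q = (\<Sum>i=1..N. lam n i *\<^sub>R S i x);
            R = alpha n *\<^sub>R x + (1 - alpha n) *\<^sub>R Q;
            kap = Max (k ` {1..N})
        in (1/2) *\<^sub>R (x + R) + ((1/2) * ((kap - alpha n) / (1 - alpha n))) *\<^sub>R (x - R))"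
  shows "coherent T \<and> (\<Inter>n. Fix (T n)) = (\<Inter>i\<in>{1..N}. Fix (S i))"
proof -
  define kap where "kap = Max (k ` {1..N})"
  define Q where "Q n x = (\<Sum>i=1..N. lam n i *\<^sub>R S i x)" for n x
  define Fs where "Fs = (\<Inter>i\<in>{1..N}. Fix (S i))"
  have kfacts: "0 \<le> k i \<and> k i < 1 \<and> k i \<le> kap" if "i \<in> {1..N}" for i
    using S[OF that] that unfolding strict_pseudocontraction_def kap_def
    by (auto intro: Max_ge)
  have kap1: "kap < 1" using alpha[of 0] unfolding kap_def by linarith
  have Tform: "T n x = x - ((1 - kap)/2) *\<^sub>R (x - Q n x)" for n x
  proof -
    have a1: "1 - alpha n \<noteq> 0" using alpha[of n] by simp
    define R where "R = alpha n *\<^sub>R x + (1 - alpha n) *\<^sub>R Q n x"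
    have xr: "x - R = (1 - alpha n) *\<^sub>R (x - Q n x)" by (simp add: R_def algebra_simps)
    have "T n x = (1/2) *\<^sub>R (x + R) + ((1/2) * ((kap - alpha n) / (1 - alpha n))) *\<^sub>R (x - R)"
      using T[of n x] by (simp add: Let_def R_def Q_def kap_def)
    also have "(1/2) *\<^sub>R (x + R) = x - (1/2) *\<^sub>R (x - R)"
      by (simp add: algebra_simps flip: scaleR_add_left)
    also have "((1/2) * ((kap - alpha n) / (1 - alpha n))) *\<^sub>R (x - R) = ((1/2) * (kap - alpha n)) *\<^sub>R (x - Q n x)"
    proof -
      have "(1/2) * ((kap - alpha n) / (1 - alpha n)) * (1 - alpha n) = (1/2) * (kap - alpha n)"
        using a1 by (simp add: field_simps)
      thus ?thesis by (simp add: xr)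
    qed
    finally have "T n x = x - ((1/2) * (1 - alpha n)) *\<^sub>R (x - Q n x) + ((1/2) * (kap - alpha n)) *\<^sub>R (x - Q n x)"
      by (simp add: xr)
    also have "\<dots> = x - ((1/2) * (1 - alpha n) - (1/2) * (kap - alpha n)) *\<^sub>R (x - Q n x)"
      by (simp add: scaleR_left_diff_distrib)
    also have "(1/2) * (1 - alpha n) - (1/2) * (kap - alpha n) = (1 - kap)/2" by (simp add: field_simps)
    finally show ?thesis .
  qed
  have Qsum: "x - Q n x = (\<Sum>i=1..N. lam n i *\<^sub>R (x - S i x))" for n x
  proof -
    have "x = (\<Sum>i=1..N. lam n i) *\<^sub>R x" using lam_sum by simp
    also have "\<dots> = (\<Sum>i=1..N. lam n i *\<^sub>R x)" by (rule scaleR_left.sum)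
    finally have "x - Q n x = (\<Sum>i=1..N. lam n i *\<^sub>R x) - (\<Sum>i=1..N. lam n i *\<^sub>R S i x)"
      unfolding Q_def by simp
    also have "\<dots> = (\<Sum>i=1..N. lam n i *\<^sub>R (x - S i x))"
      by (simp add: sum_subtractf scaleR_diff_right)
    finally show ?thesis .
  qed
  have keysum: "(\<Sum>i=1..N. lam n i * ((1 - k i) * (norm (x - S i x))\<^sup>2)) \<le> 2 * inner (x - p) (x - Q n x)"
    if p: "p \<in> Fs" for n x p
  proof -
    have "(\<Sum>i=1..N. lam n i * ((1 - k i) * (norm (x - S i x))\<^sup>2)) \<le> (\<Sum>i=1..N. lam n i * (2 * inner (x - p) (x - S i x)))"
    proof (rule sum_mono)
      fix i assume i: "i \<in> {1..N}"
      have "S i p = p" using p i unfolding Fs_def Fix_def by auto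
      from spc_fix_ineq[OF S[OF i] this, of x]
      show "lam n i * ((1 - k i) * (norm (x - S i x))\<^sup>2) \<le> lam n i * (2 * inner (x - p) (x - S i x))"
        using lam_pos[OF i, of n] by (simp add: mult_left_mono)
    qed
    also have "\<dots> = 2 * inner (x - p) (x - Q n x)"
      unfolding Qsum by (simp add: inner_sum_right sum_distrib_left algebra_simps)
    finally show ?thesis .
  qed
  have p0: "\<exists>p0. p0 \<in> Fs" using F unfolding Fs_def by blast
  then obtain p0 where p0: "p0 \<in> Fs" by blast
  have fixeq: "x \<in> Fix (T n) \<longleftrightarrow> x \<in> Fs" for n x
  proof -
    have "x \<in> Fix (T n) \<longleftrightarrow> Q n x = x"
      using kap1 by (auto simp add: Fix_def Tform)
    also have "\<dots> \<longleftrightarrow> x \<in> Fs"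
    proof
      assume q: "Q n x = x"
      have le: "(\<Sum>i=1..N. lam n i * ((1 - k i) * (norm (x - S i x))\<^sup>2)) \<le> 0"
        using keysum[OF p0, of n x] q by simp
      have nn: "\<forall>i\<in>{1..N}. 0 \<le> lam n i * ((1 - k i) * (norm (x - S i x))\<^sup>2)"
        using lam_pos kfacts by (simp add: less_imp_le)
      have all0: "\<forall>i\<in>{1..N}. lam n i * ((1 - k i) * (norm (x - S i x))\<^sup>2) = 0"
      proof -
        have "(\<Sum>i=1..N. lam n i * ((1 - k i) * (norm (x - S i x))\<^sup>2)) = 0"
          using le sum_nonneg[of "{1..N}"] nn by (meson antisym)
        thus ?thesis using sum_nonneg_eq_0_iff[of "{1..N}" "\<lambda>i. lam n i * ((1 - k i) * (norm (x - S i x))\<^sup>2)"] nn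
          by (simp only: finite_atLeastAtMost)
      qed
      have "S i x = x" if i: "i \<in> {1..N}" for i
      proof -
        have "lam n i * ((1 - k i) * (norm (x - S i x))\<^sup>2) = 0" using all0 i by blast
        moreover have "lam n i \<noteq> 0" using lam_pos[OF i, of n] by simp
        moreover have "1 - k i \<noteq> 0" using kfacts[OF i] by simp
        ultimately show ?thesis by simp
      qed
      then show "x \<in> Fs" unfolding Fs_def Fix_def by blast
    next
      assume "x \<in> Fs"
      hence "\<forall>i\<in>{1..N}. S i x = x" unfolding Fs_def Fix_def by auto
      hence "Q n x = (\<Sum>i=1..N. lam n i *\<^sub>R x)" unfolding Q_def by simp
      also have "\<dots> = x" using lam_sum by (simp flip: scaleR_left.sum)
      finally show "Q n x = x" .
    qed
    finally show ?thesis .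
  qed
  have fixall: "(\<Inter>n. Fix (T n)) = Fs" using fixeq by blast
  have coh: "coherent T"
    unfolding coherent_def
  proof (intro allI impI)
    fix z p
    assume bz: "bounded (range z)"
      and s1: "summable (\<lambda>n. (norm (z (Suc n) - z n))\<^sup>2)"
      and s2: "summable (\<lambda>n. (norm (z n - T n (z n)))\<^sup>2)"
      and wcp: "weak_cluster_point z p"
    obtain r where r: "strict_mono r" "weakly_converges (z \<circ> r) p"
      using wcp unfolding weak_cluster_point_def by blast
    obtain B where B: "\<And>n. norm (z n) \<le> B" using bz unfolding bounded_iff by blast
    have sqz: "(\<lambda>n. f n) \<longlonglongrightarrow> 0" if "\<And>n. f n \<ge> 0" "(\<lambda>n. (f n)\<^sup>2) \<longlonglongrightarrow> 0" for f :: "nat \<Rightarrow> real"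
    proof -
      have "(\<lambda>n. sqrt ((f n)\<^sup>2)) \<longlonglongrightarrow> sqrt 0" by (intro tendsto_intros that(2))
      thus ?thesis using that(1) by simp
    qed
    have t0: "(\<lambda>n. norm (z n - T n (z n))) \<longlonglongrightarrow> 0"
      using sqz[of "\<lambda>n. norm (z n - T n (z n))"] summable_LIMSEQ_zero[OF s2] by simp
    have q0: "(\<lambda>n. norm (z n - Q n (z n))) \<longlonglongrightarrow> 0"
    proof -
      have "norm (z n - T n (z n)) = ((1 - kap)/2) * norm (z n - Q n (z n))" for n
        using kap1 by (simp add: Tform)
      hence "norm (z n - Q n (z n)) = (2 / (1 - kap)) * norm (z n - T n (z n))" for n
        using kap1 by (simp add: field_simps)
      moreover have "(\<lambda>n. (2 / (1 - kap)) * norm (z n - T n (z n))) \<longlonglongrightarrow> 0"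
        by (rule tendsto_mult_right_zero[OF t0])
      ultimately show ?thesis by simp
    qed
    have "S i p = p" if i: "i \<in> {1..N}" for i
    proof -
      obtain c where c: "c > 0" "\<And>n. c \<le> lam n i" using lam_inf[OF i] by blast
      have ki: "0 \<le> k i" "k i < 1" using kfacts[OF i] by auto
      define C where "C = c * (1 - k i)"
      have C: "C > 0" using c ki by (simp add: C_def)
      have bnd: "(norm (z n - S i (z n)))\<^sup>2 \<le> (2 * (B + norm p0) / C) * norm (z n - Q n (z n))" for n
      proof -
        have "C * (norm (z n - S i (z n)))\<^sup>2 \<le> lam n i * ((1 - k i) * (norm (z n - S i (z n)))\<^sup>2)"
          unfolding C_def using c(2)[of n] ki by (simp add: mult_right_mono)
        also have "\<dots> \<le> (\<Sum>j=1..N. lam n j * ((1 - k j) * (norm (z n - S j (z n)))\<^sup>2))"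
          by (rule member_le_sum[OF i]) (use lam_pos kfacts in \<open>simp_all add: less_imp_le\<close>)
        also have "\<dots> \<le> 2 * inner (z n - p0) (z n - Q n (z n))" by (rule keysum[OF p0])
        also have "\<dots> \<le> 2 * (norm (z n - p0) * norm (z n - Q n (z n)))"
          using Cauchy_Schwarz_ineq2[of "z n - p0" "z n - Q n (z n)"] by simp
        also have "\<dots> \<le> 2 * ((B + norm p0) * norm (z n - Q n (z n)))"
          using B[of n] norm_triangle_ineq4[of "z n" p0] by (simp add: mult_right_mono)
        finally show ?thesis using C by (simp add: field_simps)
      qed
      have sq0: "(\<lambda>n. (norm (z n - S i (z n)))\<^sup>2) \<longlonglongrightarrow> 0"
      proof (rule Lim_null_comparison[where g="\<lambda>n. (2 * (B + norm p0) / C) * norm (z n - Q n (z n))"])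
        show "\<forall>\<^sub>F n in sequentially. norm ((norm (z n - S i (z n)))\<^sup>2) \<le> (2 * (B + norm p0) / C) * norm (z n - Q n (z n))"
          using bnd by simp
        show "(\<lambda>n. (2 * (B + norm p0) / C) * norm (z n - Q n (z n))) \<longlonglongrightarrow> 0"
          by (rule tendsto_mult_right_zero[OF q0])
      qed
      have "(\<lambda>n. norm (z n - S i (z n))) \<longlonglongrightarrow> 0" using sqz[of "\<lambda>n. norm (z n - S i (z n))"] sq0 by simp
      hence v0: "(\<lambda>n. z n - S i (z n)) \<longlonglongrightarrow> 0" by (simp add: tendsto_norm_zero_iff)
      have v1: "(\<lambda>n. (z \<circ> r) n - S i ((z \<circ> r) n)) \<longlonglongrightarrow> 0"
        using LIMSEQ_subseq_LIMSEQ[OF v0 r(1)] by (simp add: o_def)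
      have bd: "norm ((z \<circ> r) n - p) \<le> B + norm p" for n
        using B[of "r n"] norm_triangle_ineq4[of "z (r n)" p] by simp
      show ?thesis by (rule demiclosed[OF S[OF i] r(2) bd v1])
    qed
    hence "p \<in> Fs" unfolding Fs_def Fix_def by auto
    thus "p \<in> (\<Inter>n. Fix (T n))" using fixall by simp
  qed
  show ?thesis using coh fixall unfolding Fs_def by simp
qed

end
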